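(* Let $n\ge 2$, let $(E,q)$, $E_{\mathbb R}$, the orientation of $E_{\mathbb R}$ and the isotropic map $s\colon\mathbb C^n\to E$ with $s(z)\neq 0$ for $z\neq 0$ be as in the context, and write $s=s_++is_-$ with $s_\pm\colon\mathbb C^n\to E_{\mathbb R}$. Then $$\sqrt e\,(E,s)\;=\;\deg\Big(S^{2n-1}\to S(E_{\mathbb R}),\ z\mapsto \tfrac{s_-(z)}{|s_-(z)|}\Big).$$
   Context: Fix $n\ge2$ and a complex vector space $E$ of dimension $2n$ with a nondegenerate symmetric complex bilinear form $q$. The $n$-dimensional isotropic (maximal isotropic) subspaces of $E$ form two connected components; one is fixed (this is the choice of complex orientation) and its members are called positive, the others negative. Fix a real subspace $E_{\mathbb R}\subset E$ with $E=E_{\mathbb R}\oplus iE_{\mathbb R}$ on which $q$ is real and positive definite, with inner product $\langle\cdot,\cdot\rangle=q|_{E_{\mathbb R}}$. For an orthogonal complex structure $J$ on $E_{\mathbb R}$, $\Lambda_J=\{a-iJa: a\in E_{\mathbb R}\}$ is maximal isotropic; orient $E_{\mathbb R}$ so that $\Lambda_J$ is positive whenever $J$ is compatible with this orientation. Let $s\colon\mathbb C^n\to E$ be continuous with $q(s(z),s(z))=0$ for all $z$ and $s(z)\ne0$ for $z\ne0$. Writing $s=s_++is_-$ with $s_\pm$ valued in $E_{\mathbb R}$, isotropy means $|s_+|=|s_-|$ and $\langle s_+,s_-\rangle=0$, so $s_\pm(z)\neq0$ for $z\ne0$. Orient the unit sphere $S^{2n-1}\subset\mathbb C^n$ as the boundary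 of the unit ball with the complex orientation, and the unit sphere $S(E_{\mathbb R})$ as the boundary of the unit ball of $E_{\mathbb R}$. The orthogonal Hopf index is $\sqrt e\,(E,s):=\deg\big(S^{2n-1}\to S(E_{\mathbb R}),\ z\mapsto s_+(z)/|s_+(z)|\big)\in\mathbb Z$ (for holomorphic $s$ this equals the cosection-localised square root Euler class of Oh–Thomas at the zero $0$). *)

theory Defs
  imports "HOL-Analysis.Analysis" "HOL-Homology.Homology"
begin

(* C^n is modelled as functions nat => complex vanishing from index n on. *)
definition Cn :: "nat \<Rightarrow> (nat \<Rightarrow> complex) set" where
  "Cn n = {z. \<forall>j\<ge>n. z j = 0}"

(* E = E_R (+) i E_R is modelled as pairs (a,b) standing for a + i b, with a,b in E_R = 'e.
   cq is the complex-bilinear extension of the inner product of E_R. *)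
definition cq :: "('e::real_inner \<times> 'e) \<Rightarrow> ('e \<times> 'e) \<Rightarrow> complex" where
  "cq u v = Complex (fst u \<bullet> fst v - snd u \<bullet> snd v) (fst u \<bullet> snd v + snd u \<bullet> fst v)"

(* ordered orthonormal frame b 0, ..., b (m-1) of E_R: fixes the orientation of E_R *)
definition orthonormal_frame :: "nat \<Rightarrow> (nat \<Rightarrow> 'e::real_inner) \<Rightarrow> bool" where
  "orthonormal_frame m b \<longleftrightarrow> (\<forall>i<m. \<forall>j<m. b i \<bullet> b j = (if i = j then 1 else 0))"

(* real coordinates (x_1,y_1,...,x_n,y_n) on C^n: complex orientation *)
definition cplx_unchart :: "nat \<Rightarrow> (nat \<Rightarrow> real) \<Rightarrow> (nat \<Rightarrow> complex)" where
  "cplx_unchart n y = (\<lambda>j. if j < n then Complex (y (2*j)) (y (2*j+1)) else 0)"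

definition frame_coords :: "nat \<Rightarrow> (nat \<Rightarrow> 'e::real_inner) \<Rightarrow> 'e \<Rightarrow> nat \<Rightarrow> real" where
  "frame_coords m b x = (\<lambda>i. if i < m then b i \<bullet> x else 0)"

(* degree of S^{2n-1} -> S(E_R), z |-> f z / |f z|, with the orientations given by the charts *)
definition sphere_map_degree ::
  "nat \<Rightarrow> (nat \<Rightarrow> 'e::real_inner) \<Rightarrow> ((nat \<Rightarrow> complex) \<Rightarrow> 'e) \<Rightarrow> int" where
  "sphere_map_degree n b f =
     Brouwer_degree2 (2*n - 1)
       (\<lambda>y. frame_coords (2*n) b (f (cplx_unchart n y) /\<^sub>R norm (f (cplx_unchart n y))))"

(* orthogonal Hopf index sqrt e (E,s) := degree of s_+ / |s_+| *)
definition orth_hopf_index ::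
  "nat \<Rightarrow> (nat \<Rightarrow> 'e::real_inner) \<Rightarrow> ((nat \<Rightarrow> complex) \<Rightarrow> 'e \<times> 'e) \<Rightarrow> int" where
  "orth_hopf_index n b s = sphere_map_degree n b (\<lambda>z. fst (s z))"

end

theory Submission
  imports Defs
begin

lemma parseval:
  fixes b :: "nat \<Rightarrow> 'e::euclidean_space"
  assumes "DIM('e) = m" "orthonormal_frame m b"
  shows "(\<Sum>i<m. (b i \<bullet> x)^2) = (norm x)^2"
proof -
  have bb: "\<And>i j. i<m \<Longrightarrow> j<m \<Longrightarrow> b i \<bullet> b j = (if i = j then 1 else 0)"
    using assms(2) unfolding orthonormal_frame_def by blast
  have inj: "inj_on b {..<m}"
  proof (rule inj_onI)
    fix i j assume "i \<in> {..<m}" "j \<in> {..<m}" "b i = b j"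
    then show "i = j" using bb[of i j] bb[of i i] by (auto split: if_splits)
  qed
  define B where "B = b ` {..<m}"
  have fin: "finite B" by (simp add: B_def)
  have card: "card B = m" using inj by (simp add: B_def card_image)
  have po: "pairwise orthogonal B"
    unfolding pairwise_def orthogonal_def B_def using bb by auto
  have n1: "\<And>v. v \<in> B \<Longrightarrow> norm v = 1"
    unfolding B_def using bb by (auto simp: norm_eq_sqrt_inner)
  have "0 \<notin> B" using n1 by force
  then have ind: "independent B" using po pairwise_orthogonal_independent by blast
  have "UNIV \<subseteq> span B"
    using card_eq_dim[of B UNIV] ind fin card assms(1) by (simp add: dim_UNIV)
  then have xs: "x \<in> span B" by blast
  have ex: "(\<Sum>v\<in>B. (x \<bullet> v) *\<^sub>R v) = x"
    using orthonormal_basis_expand[OF po n1 xs fin] .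
  have "(norm x)^2 = x \<bullet> x" by (simp add: power2_norm_eq_inner)
  also have "\<dots> = x \<bullet> (\<Sum>v\<in>B. (x \<bullet> v) *\<^sub>R v)" using ex by simp
  also have "\<dots> = (\<Sum>v\<in>B. (x \<bullet> v)^2)"
    by (simp add: inner_sum_right power2_eq_square)
  also have "\<dots> = (\<Sum>i<m. (b i \<bullet> x)^2)"
    unfolding B_def by (simp add: sum.reindex[OF inj] inner_commute)
  finally show ?thesis by simp
qed

lemma nsphere_eq: "nsphere p = top_of_set {x::nat\<Rightarrow>real. (\<Sum>i\<le>p. x i ^ 2) = 1 \<and> (\<forall>i>p. x i = 0)}"
  by (simp add: nsphere euclidean_product_topology)

lemma cont_unchart: "continuous_on A (\<lambda>y. cplx_unchart n (g y))" if "\<And>k. continuous_on A (\<lambda>y. g y k)"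
  unfolding cplx_unchart_def
proof (intro continuous_on_coordinatewise_then_product)
  fix j
  show "continuous_on A (\<lambda>y. if j < n then Complex (g y (2 * j)) (g y (2 * j + 1)) else 0)"
  proof (cases "j < n")
    case True
    have "continuous_on A (\<lambda>y. complex_of_real (g y (2 * j)) + \<i> * complex_of_real (g y (2 * j + 1)))"
      by (intro continuous_intros that)
    then show ?thesis using True by (simp add: Complex_eq)
  qed simp
qed

theorem mainTheorem1:
  fixes n :: nat
    and b :: "nat \<Rightarrow> 'e::euclidean_space"
    and s :: "(nat \<Rightarrow> complex) \<Rightarrow> 'e \<times> 'e"
  assumes "n \<ge> 2"
    and "DIM('e) = 2 * n"
    and "orthonormal_frame (2 * n) b"
    and "continuous_on (Cn n) s"
    and "\<forall>z\<in>Cn n. cq (s z) (s z) = 0"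
    and "\<forall>z\<in>Cn n. z \<noteq> (\<lambda>_. 0) \<longrightarrow> s z \<noteq> 0"
  shows "orth_hopf_index n b s = sphere_map_degree n b (\<lambda>z. snd (s z))"
proof -
  define p where "p = 2*n - 1"
  have Sp: "Suc p = 2*n" using assms(1) by (simp add: p_def)
  define S where "S = {x::nat\<Rightarrow>real. (\<Sum>i\<le>p. x i ^ 2) = 1 \<and> (\<forall>i>p. x i = 0)}"
  have ns: "nsphere p = top_of_set S" unfolding S_def by (rule nsphere_eq)
  define w where "w = (\<lambda>(t::real) y. (1-t) *\<^sub>R fst (s (cplx_unchart n y)) + t *\<^sub>R snd (s (cplx_unchart n y)))"
  define H where "H = (\<lambda>(t,y). frame_coords (2*n) b (w t y /\<^sub>R norm (w t y)))"
  have CnU: "cplx_unchart n y \<in> Cn n" for y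
    by (simp add: Cn_def cplx_unchart_def)
  have nz: "w t y \<noteq> 0" if "t \<in> {0..1}" "y \<in> S" for t y
  proof -
    let ?z = "cplx_unchart n y"
    have "\<exists>i\<le>p. y i \<noteq> 0"
    proof (rule ccontr)
      assume "\<not> ?thesis"
      then have "(\<Sum>i\<le>p. y i ^ 2) = 0" by simp
      then show False using that(2) by (simp add: S_def)
    qed
    then obtain i where i: "i \<le> p" "y i \<noteq> 0" by blast
    have "i div 2 < n" using i(1) Sp by linarith
    moreover have "i = 2 * (i div 2) \<or> i = 2 * (i div 2) + 1" by linarith
    ultimately have "?z (i div 2) \<noteq> 0" using i(2)
      by (auto simp: cplx_unchart_def complex_eq_iff)
    then have "?z \<noteq> (\<lambda>_. 0)" by metis
    then have s0: "s ?z \<noteq> 0" using assms(6) CnU by blast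
    define a where "a = fst (s ?z)"
    define c where "c = snd (s ?z)"
    have q: "a \<bullet> a - c \<bullet> c = 0" "a \<bullet> c + c \<bullet> a = 0"
      using assms(5) CnU[of y] unfolding cq_def a_def c_def
      by (auto simp: complex_eq_iff)
    have ac: "a \<bullet> c = 0" using q(2) by (simp add: inner_commute)
    have a0: "a \<noteq> 0"
    proof
      assume "a = 0"
      then have "c \<bullet> c = 0" using q(1) by simp
      then have "c = 0" by simp
      then show False using s0 \<open>a = 0\<close> unfolding a_def c_def by (simp add: prod_eq_iff)
    qed
    have "w t y \<bullet> w t y = ((1-t)^2 + t^2) * (a \<bullet> a)"
      unfolding w_def a_def[symmetric] c_def[symmetric]
      using q(1) ac by (simp add: inner_add_left inner_add_right inner_commute power2_eq_square algebra_simps)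
    moreover have "(1-t)^2 + t^2 > 0"
      by (simp add: sum_power2_gt_zero_iff)
    moreover have "a \<bullet> a > 0" using a0 by simp
    ultimately have "w t y \<bullet> w t y > 0" by simp
    then show ?thesis by auto
  qed
  have img: "H (t,y) \<in> S" if "t \<in> {0..1}" "y \<in> S" for t y
  proof -
    define v where "v = w t y /\<^sub>R norm (w t y)"
    have "norm v = 1" using nz[OF that] by (simp add: v_def)
    have at: "{..p} = {..<2*n}" using Sp lessThan_Suc_atMost by metis
    have "(\<Sum>i\<le>p. (frame_coords (2*n) b v i)^2) = (\<Sum>i<2*n. (b i \<bullet> v)^2)"
      unfolding at frame_coords_def by (intro sum.cong) auto
    also have "\<dots> = 1" using parseval[OF assms(2,3), of v] \<open>norm v = 1\<close> by simp
    finally have s1: "(\<Sum>i\<le>p. (frame_coords (2*n) b v i)^2) = 1" .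
    have s2: "\<forall>i>p. frame_coords (2*n) b v i = 0"
      using Sp by (simp add: frame_coords_def)
    have "H (t,y) = frame_coords (2*n) b v" by (simp add: H_def v_def)
    then show ?thesis using s1 s2 unfolding S_def by simp
  qed
  have cont: "continuous_on ({0..1} \<times> S) H"
  proof -
    have ck: "continuous_on ({0..1} \<times> S) (\<lambda>q. snd q k)" for k
      using continuous_on_compose2[OF continuous_on_product_coordinates[of k] continuous_on_snd[OF continuous_on_id]] by auto
    have cu: "continuous_on ({0..1} \<times> S) (\<lambda>q. cplx_unchart n (snd q))"
      by (rule cont_unchart[OF ck])
    have cs: "continuous_on ({0..1} \<times> S) (\<lambda>q. s (cplx_unchart n (snd q)))"
      using continuous_on_compose2[OF assms(4) cu] CnU by blast
    have cw: "continuous_on ({0..1} \<times> S) (\<lambda>q. w (fst q) (snd q))"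
      unfolding w_def
      by (intro continuous_on_add continuous_on_scaleR continuous_on_diff continuous_on_const
            continuous_on_fst continuous_on_snd cs continuous_on_id)
    have cv: "continuous_on ({0..1} \<times> S) (\<lambda>q. w (fst q) (snd q) /\<^sub>R norm (w (fst q) (snd q)))"
      using nz by (intro continuous_on_scaleR continuous_on_inverse continuous_on_norm cw) auto
    have "continuous_on ({0..1} \<times> S) (\<lambda>q. frame_coords (2*n) b (w (fst q) (snd q) /\<^sub>R norm (w (fst q) (snd q))))"
      unfolding frame_coords_def
    proof (rule continuous_on_coordinatewise_then_product)
      fix i
      show "continuous_on ({0..1} \<times> S) (\<lambda>q. if i < 2*n then b i \<bullet> (w (fst q) (snd q) /\<^sub>R norm (w (fst q) (snd q))) else 0)"
        using continuous_on_inner[OF continuous_on_const cv, of "b i"] by (cases "i < 2*n") simp_all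
    qed
    then show ?thesis unfolding H_def by (simp add: case_prod_unfold)
  qed
  have hom: "homotopic_with (\<lambda>x. True) (nsphere p) (nsphere p)
      (\<lambda>y. frame_coords (2*n) b (fst (s (cplx_unchart n y)) /\<^sub>R norm (fst (s (cplx_unchart n y)))))
      (\<lambda>y. frame_coords (2*n) b (snd (s (cplx_unchart n y)) /\<^sub>R norm (snd (s (cplx_unchart n y)))))"
    unfolding homotopic_with_def ns
    apply (rule exI[of _ H])
    using cont img by (auto simp: H_def w_def)
  show ?thesis
    unfolding orth_hopf_index_def sphere_map_degree_def p_def[symmetric]
    using Brouwer_degree2_homotopic[OF hom] .
qed

end
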